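(* Let $G$ be a nilpotent group of class $5$. Then for all $g_1,g_2,h_1,h_2\in G$ and all $n\in\mathbb{N}$, in $G\wedge G$, $$((g_1\wedge h_1)(g_2\wedge h_2))^n = ([g_2,h_2]\wedge [[g_2,h_2],[g_1,h_1]])^{\binom{n}{3}} ([g_1,h_1]\wedge [[g_2,h_2],[g_1,h_1]])^{2\binom{n}{3}+\binom{n}{2}} ([g_2,h_2]\wedge [g_1,h_1])^{\binom{n}{2}} (g_1\wedge h_1)^n (g_2\wedge h_2)^n.$$
   Context: Conventions: ${}^g h = ghg^{-1}$, $[g,h]=ghg^{-1}h^{-1}$; $\binom{n}{r}=0$ if $r>n$. The nonabelian tensor square $G\otimes G$ is generated by symbols $g\otimes h$ subject to $gg'\otimes h=({}^g g'\otimes {}^g h)(g\otimes h)$ and $g\otimes hh'=(g\otimes h)({}^h g\otimes {}^h h')$; the exterior square $G\wedge G$ is its quotient by the subgroup generated by all $x\otimes x$, and $g\wedge h$ denotes the image of $g\otimes h$. *)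

theory Defs
  imports "HOL-Algebra.Algebra"
begin

definition comm :: "('a, 'b) monoid_scheme \<Rightarrow> 'a \<Rightarrow> 'a \<Rightarrow> 'a" where
  "comm G g h = g \<otimes>\<^bsub>G\<^esub> h \<otimes>\<^bsub>G\<^esub> inv\<^bsub>G\<^esub> g \<otimes>\<^bsub>G\<^esub> inv\<^bsub>G\<^esub> h"

definition conj :: "('a, 'b) monoid_scheme \<Rightarrow> 'a \<Rightarrow> 'a \<Rightarrow> 'a" where
  "conj G g h = g \<otimes>\<^bsub>G\<^esub> h \<otimes>\<^bsub>G\<^esub> inv\<^bsub>G\<^esub> g"

text \<open>Lower central series, shifted by one: lcs G 0 = gamma_1(G) = G,
  lcs G (Suc i) = gamma_(i+2)(G) = [G, gamma_(i+1)(G)].\<close>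

fun lcs :: "('a, 'b) monoid_scheme \<Rightarrow> nat \<Rightarrow> 'a set" where
  "lcs G 0 = carrier G"
| "lcs G (Suc i) = generate G {comm G x y | x y. x \<in> carrier G \<and> y \<in> lcs G i}"

definition nilpotent_of_class :: "('a, 'b) monoid_scheme \<Rightarrow> nat \<Rightarrow> bool" where
  "nilpotent_of_class G c \<longleftrightarrow> group G \<and> 1 \<le> c \<and>
     lcs G c = {\<one>\<^bsub>G\<^esub>} \<and> lcs G (c - 1) \<noteq> {\<one>\<^bsub>G\<^esub>}"

text \<open>A (nonabelian) exterior pairing of G into a group L: a map phi on G x G
  satisfying the defining relations of the tensor square together with phi x x = 1.
  The exterior square is the group presented by generators g /\ h and these relations.\<close>

definition exterior_pairing ::
  "('a, 'b) monoid_scheme \<Rightarrow> ('c, 'd) monoid_scheme \<Rightarrow> ('a \<Rightarrow> 'a \<Rightarrow> 'c) \<Rightarrow> bool" where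
  "exterior_pairing G L phi \<longleftrightarrow>
     (\<forall>g\<in>carrier G. \<forall>h\<in>carrier G. phi g h \<in> carrier L) \<and>
     (\<forall>g\<in>carrier G. \<forall>g'\<in>carrier G. \<forall>h\<in>carrier G.
        phi (g \<otimes>\<^bsub>G\<^esub> g') h = phi (conj G g g') (conj G g h) \<otimes>\<^bsub>L\<^esub> phi g h) \<and>
     (\<forall>g\<in>carrier G. \<forall>h\<in>carrier G. \<forall>h'\<in>carrier G.
        phi g (h \<otimes>\<^bsub>G\<^esub> h') = phi g h \<otimes>\<^bsub>L\<^esub> phi (conj G h g) (conj G h h')) \<and>
     (\<forall>x\<in>carrier G. phi x x = \<one>\<^bsub>L\<^esub>)"

text \<open>Words in the generators (g /\ h)^(+-1): (True,g,h) is g /\ h, (False,g,h) its inverse.\<close>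

type_synonym 'a ext_word = "(bool \<times> 'a \<times> 'a) list"

fun eval_word :: "('c, 'd) monoid_scheme \<Rightarrow> ('a \<Rightarrow> 'a \<Rightarrow> 'c) \<Rightarrow> 'a ext_word \<Rightarrow> 'c" where
  "eval_word L phi [] = \<one>\<^bsub>L\<^esub>"
| "eval_word L phi ((b, g, h) # w) =
     (if b then phi g h else inv\<^bsub>L\<^esub> (phi g h)) \<otimes>\<^bsub>L\<^esub> eval_word L phi w"

definition ext_words :: "('a, 'b) monoid_scheme \<Rightarrow> 'a ext_word set" where
  "ext_words G = {w. \<forall>(b, g, h) \<in> set w. g \<in> carrier G \<and> h \<in> carrier G}"

text \<open>Two words represent the same element of the presented group iff they agree under
  every exterior pairing into every group. Quantifying over groups whose elements are sets
  of words suffices (and is exact), since the presented group itself is such a group.\<close>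

definition ext_rel :: "('a, 'b) monoid_scheme \<Rightarrow> ('a ext_word \<times> 'a ext_word) set" where
  "ext_rel G = {(v, w). v \<in> ext_words G \<and> w \<in> ext_words G \<and>
     (\<forall>(L :: 'a ext_word set monoid) phi. group L \<longrightarrow> exterior_pairing G L phi \<longrightarrow>
        eval_word L phi v = eval_word L phi w)}"

definition ext_square :: "('a, 'b) monoid_scheme \<Rightarrow> 'a ext_word set monoid" where
  "ext_square G =
     \<lparr> partial_object.carrier = ext_words G // ext_rel G,
       monoid.mult = (\<lambda>A B. ext_rel G `` {(SOME v. v \<in> A) @ (SOME w. w \<in> B)}),
       monoid.one = ext_rel G `` {[]} \<rparr>"

definition wedge :: "('a, 'b) monoid_scheme \<Rightarrow> 'a \<Rightarrow> 'a \<Rightarrow> 'a ext_word set" where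
  "wedge G g h = ext_rel G `` {[(True, g, h)]}"

end

theory Submission
  imports Defs
begin


context group
begin

lemma cancel_l1 [simp]: "x \<in> carrier G \<Longrightarrow> y \<in> carrier G \<Longrightarrow> x \<otimes> (inv x \<otimes> y) = y"
  by (simp add: m_assoc[symmetric])
lemma cancel_l2 [simp]: "x \<in> carrier G \<Longrightarrow> y \<in> carrier G \<Longrightarrow> inv x \<otimes> (x \<otimes> y) = y"
  by (simp add: m_assoc[symmetric])

lemmas gs = m_assoc inv_mult_group

lemma comm_closed [simp]: "g \<in> carrier G \<Longrightarrow> h \<in> carrier G \<Longrightarrow> comm G g h \<in> carrier G"
  by (simp add: comm_def)
lemma conj_closed [simp]: "g \<in> carrier G \<Longrightarrow> h \<in> carrier G \<Longrightarrow> conj G g h \<in> carrier G"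
  by (simp add: conj_def)

lemma conj_mult_r: "u \<in> carrier G \<Longrightarrow> x \<in> carrier G \<Longrightarrow> y \<in> carrier G \<Longrightarrow>
  conj G u (x \<otimes> y) = conj G u x \<otimes> conj G u y"
  by (simp add: conj_def gs)
lemma conj_comp: "u \<in> carrier G \<Longrightarrow> v \<in> carrier G \<Longrightarrow> x \<in> carrier G \<Longrightarrow>
  conj G (u \<otimes> v) x = conj G u (conj G v x)"
  by (simp add: conj_def gs)
lemma conj_inv: "u \<in> carrier G \<Longrightarrow> c \<in> carrier G \<Longrightarrow> conj G u (inv c) = inv (conj G u c)"
  by (simp add: conj_def gs)
lemma conj_fix: "u \<in> carrier G \<Longrightarrow> c \<in> carrier G \<Longrightarrow> u \<otimes> c = c \<otimes> u \<Longrightarrow> conj G u c = c"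
  by (simp add: conj_def m_assoc)
lemma conj_inv_fix: "u \<in> carrier G \<Longrightarrow> c \<in> carrier G \<Longrightarrow> u \<otimes> c = c \<otimes> u \<Longrightarrow> conj G (inv u) c = c"
  by (metis conj_def inv_closed inv_comm inv_inv m_assoc r_inv r_one)
lemma conj_fix_inv: "u \<in> carrier G \<Longrightarrow> c \<in> carrier G \<Longrightarrow> u \<otimes> c = c \<otimes> u \<Longrightarrow> conj G u (inv c) = inv c"
  using conj_fix[of u c] by (simp add: conj_inv)
lemma conj_inv_fix_inv: "u \<in> carrier G \<Longrightarrow> c \<in> carrier G \<Longrightarrow> u \<otimes> c = c \<otimes> u \<Longrightarrow> conj G (inv u) (inv c) = inv c"
  using conj_inv_fix[of u c] by (simp add: conj_inv)
lemma conj_one [simp]: "x \<in> carrier G \<Longrightarrow> conj G \<one> x = x"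
  by (simp add: conj_def)
lemma comm_one_r [simp]: "x \<in> carrier G \<Longrightarrow> comm G x \<one> = \<one>"
  by (simp add: comm_def)
lemma comm_one_l [simp]: "x \<in> carrier G \<Longrightarrow> comm G \<one> x = \<one>"
  by (simp add: comm_def)

lemma comm_trivial_if_conj: "g \<in> carrier G \<Longrightarrow> z \<in> carrier G \<Longrightarrow> conj G g z = z \<Longrightarrow> comm G g z = \<one>"
proof -
  assume a: "g \<in> carrier G" "z \<in> carrier G" "conj G g z = z"
  have "comm G g z = conj G g z \<otimes> inv z" using a by (simp add: comm_def conj_def)
  then show ?thesis using a by simp
qed

lemma central_comm_lemma:
  assumes c: "g \<in> carrier G" "h \<in> carrier G" "z \<in> carrier G" "c \<in> carrier G" "d \<in> carrier G"
    and e1: "conj G g z = c \<otimes> z" and e2: "conj G h z = d \<otimes> z"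
    and cc: "\<And>u. u \<in> {g,h,z,d} \<Longrightarrow> u \<otimes> c = c \<otimes> u"
    and dd: "\<And>u. u \<in> {g,h,z} \<Longrightarrow> u \<otimes> d = d \<otimes> u"
  shows "comm G (comm G g h) z = \<one>"
proof -
  have cd: "c \<otimes> d = d \<otimes> c" using cc[of d] by simp
  have gi: "conj G (inv g) z = inv c \<otimes> z"
  proof -
    have "conj G (inv g) (c \<otimes> z) = z"
    proof -
      have "conj G (inv g) (conj G g z) = z" using c by (simp add: conj_def gs)
      then show ?thesis using e1 by simp
    qed
    moreover have "conj G (inv g) (c \<otimes> z) = c \<otimes> conj G (inv g) z"
      using c cc[of g] by (simp add: conj_mult_r conj_inv_fix)
    ultimately have "z = c \<otimes> conj G (inv g) z" by simp
    then show ?thesis using c by (simp add: inv_solve_left)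
  qed
  have hi: "conj G (inv h) z = inv d \<otimes> z"
  proof -
    have "conj G (inv h) (d \<otimes> z) = z"
    proof -
      have "conj G (inv h) (conj G h z) = z" using c by (simp add: conj_def gs)
      then show ?thesis using e2 by simp
    qed
    moreover have "conj G (inv h) (d \<otimes> z) = d \<otimes> conj G (inv h) z"
      using c dd[of h] by (simp add: conj_mult_r conj_inv_fix)
    ultimately have "z = d \<otimes> conj G (inv h) z" by simp
    then show ?thesis using c by (simp add: inv_solve_left)
  qed
  have "conj G (comm G g h) z = conj G g (conj G h (conj G (inv g) (conj G (inv h) z)))"
    using c by (simp add: comm_def conj_comp)
  also have "\<dots> = conj G g (conj G h (conj G (inv g) (inv d \<otimes> z)))" using hi by simp
  also have "\<dots> = conj G g (conj G h (inv d \<otimes> (inv c \<otimes> z)))"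
    using c gi dd[of g] by (simp add: conj_mult_r conj_inv_fix_inv)
  also have "\<dots> = conj G g (inv d \<otimes> (inv c \<otimes> (d \<otimes> z)))"
    using c e2 dd[of h] cc[of h] by (simp add: conj_mult_r conj_fix_inv)
  also have "\<dots> = inv d \<otimes> (inv c \<otimes> (d \<otimes> (c \<otimes> z)))"
    using c e1 dd[of g] cc[of g] by (simp add: conj_mult_r conj_fix_inv conj_fix)
  also have "\<dots> = z"
  proof -
    have "d \<otimes> (c \<otimes> z) = c \<otimes> (d \<otimes> z)" using cd c by (simp add: m_assoc[symmetric])
    then show ?thesis using c by simp
  qed
  finally show ?thesis using c comm_trivial_if_conj by simp
qed

end



context group
begin

lemma comm_one_imp_commute: "x \<in> carrier G \<Longrightarrow> y \<in> carrier G \<Longrightarrow> comm G x y = \<one> \<Longrightarrow> x \<otimes> y = y \<otimes> x"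
proof -
  assume a: "x \<in> carrier G" "y \<in> carrier G" "comm G x y = \<one>"
  then have "x \<otimes> y \<otimes> inv x \<otimes> inv y = \<one>" by (simp add: comm_def)
  then have "x \<otimes> y \<otimes> inv x = y" using a by (simp add: inv_solve_right')
  then show ?thesis using a by (simp add: inv_solve_right')
qed

lemma conj_as_comm: "x \<in> carrier G \<Longrightarrow> y \<in> carrier G \<Longrightarrow> conj G x y = comm G x y \<otimes> y"
  unfolding comm_def conj_def by (simp add: m_assoc)

lemma lcs_normal: "lcs G i \<lhd> G"
proof (induction i)
  case 0
  then show ?case by (simp add: normal_self)
next
  case (Suc i)
  have sub: "lcs G i \<subseteq> carrier G" using Suc normal_imp_subgroup subgroup.subset by blast
  show ?case
    unfolding lcs.simps
  proof (rule normal_generateI)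
    show "{comm G x y |x y. x \<in> carrier G \<and> y \<in> lcs G i} \<subseteq> carrier G"
      using sub by auto
  next
    fix h g assume h: "h \<in> {comm G x y |x y. x \<in> carrier G \<and> y \<in> lcs G i}" and g: "g \<in> carrier G"
    then obtain x y where xy: "h = comm G x y" "x \<in> carrier G" "y \<in> lcs G i" by blast
    have yc: "y \<in> carrier G" using xy sub by auto
    have "g \<otimes> h \<otimes> inv g = comm G (g \<otimes> x \<otimes> inv g) (g \<otimes> y \<otimes> inv g)"
      using xy yc g unfolding comm_def by (simp add: gs)
    moreover have "g \<otimes> y \<otimes> inv g \<in> lcs G i" using Suc xy g normal_inv_iff by blast
    ultimately show "g \<otimes> h \<otimes> inv g \<in> {comm G x y |x y. x \<in> carrier G \<and> y \<in> lcs G i}"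
      using xy g by blast
  qed
qed

lemma lcs_sub: "lcs G i \<subseteq> carrier G"
  using lcs_normal normal_imp_subgroup subgroup.subset by blast

lemma lcs_step: "x \<in> carrier G \<Longrightarrow> y \<in> lcs G i \<Longrightarrow> comm G x y \<in> lcs G (Suc i)"
  by (auto intro: generate.incl)

lemma lcs_K:
  assumes z: "z \<in> lcs G i" and g: "g \<in> carrier G" and h: "h \<in> carrier G"
  shows "comm G (comm G g h) z \<in> lcs G (Suc (Suc i))"
proof -
  define N where "N = lcs G (Suc (Suc i))"
  interpret N: normal N G unfolding N_def by (rule lcs_normal)
  interpret Q: group "G Mod N" by (rule N.factorgroup_is_group)
  interpret pi: group_hom G "G Mod N" "\<lambda>a. N #> a"
    by (unfold_locales) (rule N.r_coset_hom_Mod)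
  let ?p = "\<lambda>a. N #> a"
  have zc: "z \<in> carrier G" using z lcs_sub by auto
  have pcomm: "?p (comm G x y) = comm (G Mod N) (?p x) (?p y)" if "x \<in> carrier G" "y \<in> carrier G" for x y
    using that unfolding comm_def by simp
  have pconj: "?p (conj G x y) = conj (G Mod N) (?p x) (?p y)" if "x \<in> carrier G" "y \<in> carrier G" for x y
    using that unfolding conj_def by simp
  have central: "?p v \<otimes>\<^bsub>G Mod N\<^esub> ?p (comm G u z) = ?p (comm G u z) \<otimes>\<^bsub>G Mod N\<^esub> ?p v"
    if "v \<in> carrier G" "u \<in> carrier G" for u v
  proof -
    have "comm G v (comm G u z) \<in> N" unfolding N_def using that z by (intro lcs_step) auto
    then have "?p (comm G v (comm G u z)) = \<one>\<^bsub>G Mod N\<^esub>" using N.rcos_const[OF is_group] by simp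
    then have "comm (G Mod N) (?p v) (?p (comm G u z)) = \<one>\<^bsub>G Mod N\<^esub>" using that zc pcomm by simp
    then show ?thesis using that zc by (intro Q.comm_one_imp_commute) auto
  qed
  have e: "conj (G Mod N) (?p u) (?p z) = ?p (comm G u z) \<otimes>\<^bsub>G Mod N\<^esub> ?p z" if "u \<in> carrier G" for u
    using that zc by (simp add: pconj[symmetric] conj_as_comm)
  have "comm (G Mod N) (comm (G Mod N) (?p g) (?p h)) (?p z) = \<one>\<^bsub>G Mod N\<^esub>"
  proof (rule Q.central_comm_lemma[where c="?p (comm G g z)" and d = "?p (comm G h z)"])
    show "?p g \<in> carrier (G Mod N)" "?p h \<in> carrier (G Mod N)" "?p z \<in> carrier (G Mod N)"
      "?p (comm G g z) \<in> carrier (G Mod N)" "?p (comm G h z) \<in> carrier (G Mod N)"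
      using g h zc by (simp_all add: pi.hom_closed)
    show "conj (G Mod N) (?p g) (?p z) = ?p (comm G g z) \<otimes>\<^bsub>G Mod N\<^esub> ?p z" by (rule e[OF g])
    show "conj (G Mod N) (?p h) (?p z) = ?p (comm G h z) \<otimes>\<^bsub>G Mod N\<^esub> ?p z" by (rule e[OF h])
    fix u
    show "u \<in> {?p g, ?p h, ?p z, ?p (comm G h z)} \<Longrightarrow> u \<otimes>\<^bsub>G Mod N\<^esub> ?p (comm G g z) = ?p (comm G g z) \<otimes>\<^bsub>G Mod N\<^esub> u"
      using central[OF g g] central[OF h g] central[OF zc g] central[of "comm G h z" g] h zc g
      by (elim insertE emptyE) simp_all
    show "u \<in> {?p g, ?p h, ?p z} \<Longrightarrow> u \<otimes>\<^bsub>G Mod N\<^esub> ?p (comm G h z) = ?p (comm G h z) \<otimes>\<^bsub>G Mod N\<^esub> u"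
      using central[OF g h] central[OF h h] central[OF zc h] h zc g
      by (elim insertE emptyE) simp_all
  qed
  then have "?p (comm G (comm G g h) z) = N" using g h zc by (simp add: pcomm)
  moreover have "comm G (comm G g h) z \<in> ?p (comm G (comm G g h) z)"
    using g h zc by (intro rcos_self) (auto intro: N.subgroup_axioms)
  ultimately show ?thesis unfolding N_def by simp
qed

end



locale ext_pair = G: group G + L: group L
  for G :: "('a, 'b) monoid_scheme" and L :: "('c, 'd) monoid_scheme" +
  fixes phi :: "'a \<Rightarrow> 'a \<Rightarrow> 'c"
  assumes ep: "exterior_pairing G L phi"
begin

lemma phi_closed [simp]: "g \<in> carrier G \<Longrightarrow> h \<in> carrier G \<Longrightarrow> phi g h \<in> carrier L"
  using ep unfolding exterior_pairing_def by blast

lemma R1: "g \<in> carrier G \<Longrightarrow> g' \<in> carrier G \<Longrightarrow> h \<in> carrier G \<Longrightarrow>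
  phi (g \<otimes>\<^bsub>G\<^esub> g') h = phi (conj G g g') (conj G g h) \<otimes>\<^bsub>L\<^esub> phi g h"
  using ep unfolding exterior_pairing_def by blast

lemma R2: "g \<in> carrier G \<Longrightarrow> h \<in> carrier G \<Longrightarrow> h' \<in> carrier G \<Longrightarrow>
  phi g (h \<otimes>\<^bsub>G\<^esub> h') = phi g h \<otimes>\<^bsub>L\<^esub> phi (conj G h g) (conj G h h')"
  using ep unfolding exterior_pairing_def by blast

lemma phi_one_r [simp]: "x \<in> carrier G \<Longrightarrow> phi x \<one>\<^bsub>G\<^esub> = \<one>\<^bsub>L\<^esub>"
proof -
  assume x: "x \<in> carrier G"
  have "phi x (\<one>\<^bsub>G\<^esub> \<otimes>\<^bsub>G\<^esub> \<one>\<^bsub>G\<^esub>) = phi x \<one>\<^bsub>G\<^esub> \<otimes>\<^bsub>L\<^esub> phi x \<one>\<^bsub>G\<^esub>"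
    using R2[of x "\<one>\<^bsub>G\<^esub>" "\<one>\<^bsub>G\<^esub>"] x by simp
  then have "phi x \<one>\<^bsub>G\<^esub> \<otimes>\<^bsub>L\<^esub> \<one>\<^bsub>L\<^esub> = phi x \<one>\<^bsub>G\<^esub> \<otimes>\<^bsub>L\<^esub> phi x \<one>\<^bsub>G\<^esub>" using x by simp
  then show ?thesis using x by (metis L.l_cancel_one L.one_closed G.one_closed phi_closed)
qed

lemma F1:
  assumes c: "g \<in> carrier G" "h \<in> carrier G" "u \<in> carrier G" "v \<in> carrier G"
  shows "phi g h \<otimes>\<^bsub>L\<^esub> phi u v =
    phi (conj G (comm G g h) u) (conj G (comm G g h) v) \<otimes>\<^bsub>L\<^esub> phi g h"
proof -
  define g' where "g' = conj G (inv\<^bsub>G\<^esub> (h \<otimes>\<^bsub>G\<^esub> g)) u"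
  define h' where "h' = conj G (inv\<^bsub>G\<^esub> (h \<otimes>\<^bsub>G\<^esub> g)) v"
  have cc: "g' \<in> carrier G" "h' \<in> carrier G" unfolding g'_def h'_def using c by auto
  note cs = c cc
  have A: "phi (g \<otimes>\<^bsub>G\<^esub> g') (h \<otimes>\<^bsub>G\<^esub> h') =
     phi (conj G g g') (conj G g h) \<otimes>\<^bsub>L\<^esub> (phi (conj G (conj G g h) (conj G g g')) (conj G (conj G g h) (conj G g h'))
      \<otimes>\<^bsub>L\<^esub> (phi g h \<otimes>\<^bsub>L\<^esub> phi (conj G h g) (conj G h h')))"
    using cs R1[of g g' "h \<otimes>\<^bsub>G\<^esub> h'"] R2[of "conj G g g'" "conj G g h" "conj G g h'"] R2[of g h h']
    by (simp add: G.conj_mult_r L.m_assoc)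
  have B: "phi (g \<otimes>\<^bsub>G\<^esub> g') (h \<otimes>\<^bsub>G\<^esub> h') =
     phi (conj G g g') (conj G g h) \<otimes>\<^bsub>L\<^esub> (phi g h \<otimes>\<^bsub>L\<^esub>
      (phi (conj G (conj G h g) (conj G h g')) (conj G (conj G h g) (conj G h h')) \<otimes>\<^bsub>L\<^esub> phi (conj G h g) (conj G h h')))"
    using cs R2[of "g \<otimes>\<^bsub>G\<^esub> g'" h h'] R1[of g g' h] R1[of "conj G h g" "conj G h g'" "conj G h h'"]
    by (simp add: G.conj_mult_r L.m_assoc)
  have "phi (conj G (conj G g h) (conj G g g')) (conj G (conj G g h) (conj G g h')) \<otimes>\<^bsub>L\<^esub> phi g h
     = phi g h \<otimes>\<^bsub>L\<^esub> phi (conj G (conj G h g) (conj G h g')) (conj G (conj G h g) (conj G h h'))"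
  proof -
    let ?Y = "phi (conj G (conj G g h) (conj G g g')) (conj G (conj G g h) (conj G g h'))"
    let ?W = "phi (conj G (conj G h g) (conj G h g')) (conj G (conj G h g) (conj G h h'))"
    let ?Z = "phi (conj G h g) (conj G h h')"
    have "?Y \<otimes>\<^bsub>L\<^esub> (phi g h \<otimes>\<^bsub>L\<^esub> ?Z) = phi g h \<otimes>\<^bsub>L\<^esub> (?W \<otimes>\<^bsub>L\<^esub> ?Z)"
      using A B cs by simp
    then have "(?Y \<otimes>\<^bsub>L\<^esub> phi g h) \<otimes>\<^bsub>L\<^esub> ?Z = (phi g h \<otimes>\<^bsub>L\<^esub> ?W) \<otimes>\<^bsub>L\<^esub> ?Z"
      using cs by (simp add: L.m_assoc)
    then show ?thesis using cs by (simp del: L.r_cancel_one L.l_cancel_one)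
  qed
  moreover have "conj G (conj G g h) (conj G g g') = conj G (comm G g h) u"
    "conj G (conj G g h) (conj G g h') = conj G (comm G g h) v"
    "conj G (conj G h g) (conj G h g') = u" "conj G (conj G h g) (conj G h h') = v"
    unfolding g'_def h'_def conj_def comm_def using c by (simp_all add: G.gs)
  ultimately show ?thesis by simp
qed

lemma F2:
  assumes c: "g \<in> carrier G" "u \<in> carrier G" "v \<in> carrier G"
  shows "phi (conj G g u) (conj G g v) = phi g (comm G u v) \<otimes>\<^bsub>L\<^esub> phi u v"
proof -
  define mm where "mm = conj G u v"
  define kk where "kk = comm G u v"
  have mc: "mm \<in> carrier G" "kk \<in> carrier G" unfolding mm_def kk_def using c by auto
  have s0: "kk = mm \<otimes>\<^bsub>G\<^esub> inv\<^bsub>G\<^esub> v" unfolding mm_def kk_def comm_def conj_def using c by (simp add: G.m_assoc)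
  define tX where "tX = phi (conj G mm g) (conj G mm (inv\<^bsub>G\<^esub> v))"
  define tY where "tY = phi (conj G kk g) (conj G kk v)"
  define tM where "tM = phi g mm"
  define tU where "tU = phi u v"
  define tB where "tB = phi g v"
  define tA where "tA = phi (conj G g u) (conj G g v)"
  have cl: "tX \<in> carrier L" "tY \<in> carrier L" "tM \<in> carrier L" "tU \<in> carrier L" "tB \<in> carrier L" "tA \<in> carrier L"
    unfolding tX_def tY_def tM_def tU_def tB_def tA_def using c mc by auto
  have i: "phi g kk = tM \<otimes>\<^bsub>L\<^esub> tX"
    unfolding s0 tM_def tX_def using c mc R2[of g mm "inv\<^bsub>G\<^esub> v"] by simp
  have ii: "phi (g \<otimes>\<^bsub>G\<^esub> u) v = tM \<otimes>\<^bsub>L\<^esub> tU"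
  proof -
    have "phi (u \<otimes>\<^bsub>G\<^esub> (inv\<^bsub>G\<^esub> u \<otimes>\<^bsub>G\<^esub> g \<otimes>\<^bsub>G\<^esub> u)) v =
      phi (conj G u (inv\<^bsub>G\<^esub> u \<otimes>\<^bsub>G\<^esub> g \<otimes>\<^bsub>G\<^esub> u)) (conj G u v) \<otimes>\<^bsub>L\<^esub> phi u v"
      using c by (intro R1) auto
    moreover have "u \<otimes>\<^bsub>G\<^esub> (inv\<^bsub>G\<^esub> u \<otimes>\<^bsub>G\<^esub> g \<otimes>\<^bsub>G\<^esub> u) = g \<otimes>\<^bsub>G\<^esub> u"
      using c by (simp add: G.m_assoc)
    moreover have "conj G u (inv\<^bsub>G\<^esub> u \<otimes>\<^bsub>G\<^esub> g \<otimes>\<^bsub>G\<^esub> u) = g"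
      using c by (simp add: conj_def G.m_assoc)
    ultimately show ?thesis unfolding tM_def tU_def mm_def by simp
  qed
  have iii: "tY \<otimes>\<^bsub>L\<^esub> tX = \<one>\<^bsub>L\<^esub>"
  proof -
    define hh where "hh = conj G kk v"
    have hc: "hh \<in> carrier G" unfolding hh_def using mc c by simp
    have "phi (conj G kk g) (hh \<otimes>\<^bsub>G\<^esub> inv\<^bsub>G\<^esub> hh) =
      phi (conj G kk g) hh \<otimes>\<^bsub>L\<^esub> phi (conj G hh (conj G kk g)) (conj G hh (inv\<^bsub>G\<^esub> hh))"
      using hc mc c by (intro R2) auto
    moreover have "conj G hh (conj G kk g) = conj G mm g"
      unfolding hh_def s0 conj_def using c mc by (simp add: G.gs)
    moreover have "conj G hh (inv\<^bsub>G\<^esub> hh) = conj G mm (inv\<^bsub>G\<^esub> v)"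
      unfolding hh_def s0 conj_def using c mc by (simp add: G.gs)
    ultimately show ?thesis using hc mc c unfolding tX_def tY_def hh_def by simp
  qed
  have iv: "tU \<otimes>\<^bsub>L\<^esub> tB = tY \<otimes>\<^bsub>L\<^esub> tU"
    unfolding tU_def tB_def tY_def kk_def using F1[of u v g v] c by simp
  have v: "phi (g \<otimes>\<^bsub>G\<^esub> u) v = tA \<otimes>\<^bsub>L\<^esub> tB"
    unfolding tA_def tB_def using c R1 by simp
  have Xe: "tX = inv\<^bsub>L\<^esub> tY" using iii cl by (metis L.inv_equality L.inv_inv)
  have Ye: "tY = tU \<otimes>\<^bsub>L\<^esub> tB \<otimes>\<^bsub>L\<^esub> inv\<^bsub>L\<^esub> tU" using iv cl by (simp add: L.m_assoc)
  have "tM \<otimes>\<^bsub>L\<^esub> tX \<otimes>\<^bsub>L\<^esub> tU = tM \<otimes>\<^bsub>L\<^esub> tU \<otimes>\<^bsub>L\<^esub> inv\<^bsub>L\<^esub> tB"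
    unfolding Xe Ye using cl by (simp add: L.gs)
  also have "\<dots> = tA \<otimes>\<^bsub>L\<^esub> tB \<otimes>\<^bsub>L\<^esub> inv\<^bsub>L\<^esub> tB" using ii v by simp
  also have "\<dots> = tA" using cl by (simp add: L.m_assoc)
  finally have fin: "tM \<otimes>\<^bsub>L\<^esub> tX \<otimes>\<^bsub>L\<^esub> tU = tA" .
  have e2: "phi g (comm G u v) \<otimes>\<^bsub>L\<^esub> phi u v = tM \<otimes>\<^bsub>L\<^esub> tX \<otimes>\<^bsub>L\<^esub> tU"
    using i unfolding kk_def tU_def by simp
  have "phi (conj G g u) (conj G g v) = tA" by (simp only: tA_def)
  also have "\<dots> = tM \<otimes>\<^bsub>L\<^esub> tX \<otimes>\<^bsub>L\<^esub> tU" using fin by (rule sym)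
  also have "\<dots> = phi g (comm G u v) \<otimes>\<^bsub>L\<^esub> phi u v" using e2 by (rule sym)
  finally show ?thesis .
qed

lemma C:
  assumes c: "g \<in> carrier G" "h \<in> carrier G" "u \<in> carrier G" "v \<in> carrier G"
  shows "phi g h \<otimes>\<^bsub>L\<^esub> phi u v =
    phi (comm G g h) (comm G u v) \<otimes>\<^bsub>L\<^esub> phi u v \<otimes>\<^bsub>L\<^esub> phi g h"
  using F1[OF c] F2[of "comm G g h" u v] c by simp

lemma C1:
  assumes c: "g \<in> carrier G" "h \<in> carrier G" "u \<in> carrier G" "v \<in> carrier G"
    and e: "comm G u v = \<one>\<^bsub>G\<^esub>"
  shows "phi g h \<otimes>\<^bsub>L\<^esub> phi u v = phi u v \<otimes>\<^bsub>L\<^esub> phi g h"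
  using C[OF c] e c by simp

end



lemma two_choose: "n * n = 2 * (n choose 2) + (n::nat)"
proof (induction n)
  case 0 then show ?case by simp
next
  case (Suc n)
  have "Suc n choose 2 = n + (n choose 2)"
    by (simp add: numeral_2_eq_2)
  then show ?case using Suc by (simp add: algebra_simps)
qed

context group
begin

lemma pow_comm1: "a \<in> carrier G \<Longrightarrow> b \<in> carrier G \<Longrightarrow> a \<otimes> b = b \<otimes> a \<Longrightarrow> a [^] (n::nat) \<otimes> b = b \<otimes> a [^] n"
proof (induction n)
  case 0 then show ?case by simp
next
  case (Suc n)
  have "a [^] Suc n \<otimes> b = a [^] n \<otimes> (a \<otimes> b)" using Suc by (simp add: m_assoc)
  also have "\<dots> = a [^] n \<otimes> (b \<otimes> a)" using Suc.prems(3) by simp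
  also have "\<dots> = (a [^] n \<otimes> b) \<otimes> a" using Suc.prems(1,2) by (simp add: m_assoc)
  also have "\<dots> = b \<otimes> a [^] Suc n" using Suc by (simp add: m_assoc[symmetric])
  finally show ?case .
qed

lemma pow_comm2: "a \<in> carrier G \<Longrightarrow> b \<in> carrier G \<Longrightarrow> a \<otimes> b = b \<otimes> a \<Longrightarrow> a [^] (n::nat) \<otimes> b [^] (m::nat) = b [^] m \<otimes> a [^] n"
  by (metis nat_pow_closed pow_comm1)

lemma pow_front: "a \<in> carrier G \<Longrightarrow> z \<in> carrier G \<Longrightarrow> a \<otimes> (a [^] (n::nat) \<otimes> z) = a [^] n \<otimes> (a \<otimes> z)"
  using pow_comm1[of a a n] by (simp add: m_assoc[symmetric])

lemma swap_front: "a \<in> carrier G \<Longrightarrow> b \<in> carrier G \<Longrightarrow> z \<in> carrier G \<Longrightarrow> a \<otimes> b = b \<otimes> a \<Longrightarrow> a \<otimes> (b \<otimes> z) = b \<otimes> (a \<otimes> z)"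
  by (simp add: m_assoc[symmetric])

lemma collect:
  assumes c: "x \<in> carrier G" "y \<in> carrier G" "P \<in> carrier G" "Q \<in> carrier G" "R \<in> carrier G"
    and yx: "y \<otimes> x = R \<otimes> x \<otimes> y" and yR: "y \<otimes> R = P \<otimes> R \<otimes> y" and xR: "x \<otimes> R = Q \<otimes> R \<otimes> x"
    and Px: "x \<otimes> P = P \<otimes> x" and Py: "y \<otimes> P = P \<otimes> y" and PR: "R \<otimes> P = P \<otimes> R" and PQ: "Q \<otimes> P = P \<otimes> Q"
    and Qx: "x \<otimes> Q = Q \<otimes> x" and Qy: "y \<otimes> Q = Q \<otimes> y" and QR: "R \<otimes> Q = Q \<otimes> R"
  shows "(x \<otimes> y) [^] (n::nat) = P [^] (n choose 3) \<otimes> Q [^] (2 * (n choose 3) + (n choose 2))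
     \<otimes> R [^] (n choose 2) \<otimes> x [^] n \<otimes> y [^] n"
proof -
  have yn_R: "y [^] k \<otimes> R = P [^] k \<otimes> R \<otimes> y [^] k" for k :: nat
  proof (induction k)
    case 0 then show ?case using c by simp
  next
    case (Suc k)
    have "y [^] Suc k \<otimes> R = y [^] k \<otimes> (y \<otimes> R)" using c by (simp add: m_assoc)
    also have "\<dots> = (y [^] k \<otimes> P) \<otimes> (R \<otimes> y)" using c yR by (simp add: m_assoc)
    also have "\<dots> = P \<otimes> (y [^] k \<otimes> R) \<otimes> y" using c pow_comm1[of y P k] Py by (simp add: m_assoc)
    also have "\<dots> = P [^] Suc k \<otimes> R \<otimes> y [^] Suc k" using c Suc
      by (simp add: m_assoc pow_front)
    finally show ?case .
  qed
  have xn_R: "x [^] k \<otimes> R = Q [^] k \<otimes> R \<otimes> x [^] k" for k :: nat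
  proof (induction k)
    case 0 then show ?case using c by simp
  next
    case (Suc k)
    have "x [^] Suc k \<otimes> R = x [^] k \<otimes> (x \<otimes> R)" using c by (simp add: m_assoc)
    also have "\<dots> = (x [^] k \<otimes> Q) \<otimes> (R \<otimes> x)" using c xR by (simp add: m_assoc)
    also have "\<dots> = Q \<otimes> (x [^] k \<otimes> R) \<otimes> x" using c pow_comm1[of x Q k] Qx by (simp add: m_assoc)
    also have "\<dots> = Q [^] Suc k \<otimes> R \<otimes> x [^] Suc k" using c Suc
      by (simp add: m_assoc pow_front)
    finally show ?case .
  qed
  have xn_Rm: "x [^] k \<otimes> R [^] m = Q [^] (k * m) \<otimes> R [^] m \<otimes> x [^] k" for k m :: nat
  proof (induction m)
    case 0 then show ?case using c by simp
  next
    case (Suc m)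
    have "x [^] k \<otimes> R [^] Suc m = (x [^] k \<otimes> R [^] m) \<otimes> R" using c by (simp add: m_assoc)
    also have "\<dots> = Q [^] (k * m) \<otimes> R [^] m \<otimes> (x [^] k \<otimes> R)" using c Suc by (simp add: m_assoc)
    also have "\<dots> = Q [^] (k * m) \<otimes> (R [^] m \<otimes> Q [^] k) \<otimes> R \<otimes> x [^] k" using c xn_R by (simp add: m_assoc)
    also have "\<dots> = Q [^] (k * m) \<otimes> Q [^] k \<otimes> (R [^] m \<otimes> R) \<otimes> x [^] k"
    proof -
      have X: "R [^] m \<otimes> Q [^] k = Q [^] k \<otimes> R [^] m" using c pow_comm2[of R Q m k] QR by simp
      show ?thesis using c X by (simp add: m_assoc swap_front[of "R [^] m" "Q [^] k"])
    qed
    also have "\<dots> = Q [^] (k * Suc m) \<otimes> R [^] Suc m \<otimes> x [^] k"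
      using c by (simp add: nat_pow_mult add.commute)
    finally show ?case .
  qed
  have yn_x: "y [^] k \<otimes> x = P [^] (k choose 2) \<otimes> R [^] k \<otimes> x \<otimes> y [^] k" for k :: nat
  proof (induction k)
    case 0 then show ?case using c by (simp add: numeral_2_eq_2)
  next
    case (Suc k)
    have "y [^] Suc k \<otimes> x = y [^] k \<otimes> (y \<otimes> x)" using c by (simp add: m_assoc)
    also have "\<dots> = (y [^] k \<otimes> R) \<otimes> x \<otimes> y" using c yx by (simp add: m_assoc)
    also have "\<dots> = P [^] k \<otimes> R \<otimes> (y [^] k \<otimes> x) \<otimes> y" using c yn_R by (simp add: m_assoc)
    also have "\<dots> = P [^] k \<otimes> (R \<otimes> P [^] (k choose 2)) \<otimes> R [^] k \<otimes> x \<otimes> (y [^] k \<otimes> y)"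
      using c Suc by (simp add: m_assoc)
    also have "\<dots> = (P [^] k \<otimes> P [^] (k choose 2)) \<otimes> (R \<otimes> R [^] k) \<otimes> x \<otimes> (y [^] k \<otimes> y)"
    proof -
      have "R \<otimes> P [^] (k choose 2) = P [^] (k choose 2) \<otimes> R" using c pow_comm1[of P R "k choose 2"] PR by simp
      then show ?thesis using c by (simp add: m_assoc swap_front[of R "P [^] (k choose 2)"])
    qed
    also have "\<dots> = P [^] (Suc k choose 2) \<otimes> R [^] Suc k \<otimes> x \<otimes> y [^] Suc k"
      using c by (simp add: nat_pow_mult numeral_2_eq_2 nat_pow_Suc2[symmetric] del: nat_pow_Suc)
    finally show ?case .
  qed
  show ?thesis
  proof (induction n)
    case 0 then show ?case using c by (simp add: numeral_2_eq_2 numeral_3_eq_3)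
  next
    case (Suc n)
    define a where "a = n choose 3"
    define b where "b = 2 * (n choose 3) + (n choose 2)"
    define e where "e = n choose 2"
    have IH: "(x \<otimes> y) [^] n = P [^] a \<otimes> Q [^] b \<otimes> R [^] e \<otimes> x [^] n \<otimes> y [^] n"
      using Suc unfolding a_def b_def e_def .
    have "(x \<otimes> y) [^] Suc n = P [^] a \<otimes> Q [^] b \<otimes> R [^] e \<otimes> x [^] n \<otimes> (y [^] n \<otimes> x) \<otimes> y"
      using c IH by (simp add: m_assoc)
    also have "\<dots> = P [^] a \<otimes> Q [^] b \<otimes> R [^] e \<otimes> (x [^] n \<otimes> P [^] e) \<otimes> R [^] n \<otimes> x \<otimes> y [^] n \<otimes> y"
      using c yn_x unfolding e_def by (simp add: m_assoc)
    also have "\<dots> = P [^] a \<otimes> Q [^] b \<otimes> R [^] e \<otimes> P [^] e \<otimes> (x [^] n \<otimes> R [^] n) \<otimes> x \<otimes> y [^] n \<otimes> y"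
    proof -
      have X: "x [^] n \<otimes> P [^] e = P [^] e \<otimes> x [^] n" using c pow_comm2[of x P n e] Px by simp
      show ?thesis using c X by (simp add: m_assoc swap_front[of "x [^] n" "P [^] e"])
    qed
    also have "\<dots> = P [^] a \<otimes> Q [^] b \<otimes> (R [^] e \<otimes> P [^] e) \<otimes> Q [^] (n * n) \<otimes> R [^] n \<otimes> x [^] n \<otimes> x \<otimes> y [^] n \<otimes> y"
      using c xn_Rm by (simp add: m_assoc)
    also have "\<dots> = P [^] a \<otimes> (Q [^] b \<otimes> P [^] e) \<otimes> R [^] e \<otimes> Q [^] (n * n) \<otimes> R [^] n \<otimes> x [^] n \<otimes> x \<otimes> y [^] n \<otimes> y"
    proof -
      have X: "R [^] e \<otimes> P [^] e = P [^] e \<otimes> R [^] e" using c pow_comm2[of R P e e] PR by simp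
      show ?thesis using c X by (simp add: m_assoc swap_front[of "R [^] e" "P [^] e"])
    qed
    also have "\<dots> = P [^] a \<otimes> P [^] e \<otimes> Q [^] b \<otimes> (R [^] e \<otimes> Q [^] (n * n)) \<otimes> R [^] n \<otimes> x [^] n \<otimes> x \<otimes> y [^] n \<otimes> y"
    proof -
      have X: "Q [^] b \<otimes> P [^] e = P [^] e \<otimes> Q [^] b" using c pow_comm2[of Q P b e] PQ by simp
      show ?thesis using c X by (simp add: m_assoc swap_front[of "Q [^] b" "P [^] e"])
    qed
    also have "\<dots> = P [^] a \<otimes> P [^] e \<otimes> Q [^] b \<otimes> Q [^] (n * n) \<otimes> R [^] e \<otimes> R [^] n \<otimes> x [^] n \<otimes> x \<otimes> y [^] n \<otimes> y"
    proof -
      have X: "R [^] e \<otimes> Q [^] (n * n) = Q [^] (n * n) \<otimes> R [^] e" using c pow_comm2[of R Q e "n * n"] QR by simp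
      show ?thesis using c X by (simp add: m_assoc swap_front[of "R [^] e" "Q [^] (n * n)"])
    qed
    also have "\<dots> = P [^] (a + e) \<otimes> Q [^] (b + n * n) \<otimes> R [^] (e + n) \<otimes> x [^] Suc n \<otimes> y [^] Suc n"
      using c by (simp add: m_assoc nat_pow_mult[symmetric] del: nat_pow_Suc)
    also have "a + e = Suc n choose 3" unfolding a_def e_def by (simp add: numeral_3_eq_3 numeral_2_eq_2)
    also have "b + n * n = 2 * (Suc n choose 3) + (Suc n choose 2)"
      unfolding b_def using two_choose[of n] by (simp add: numeral_3_eq_3 numeral_2_eq_2)
    also have "e + n = Suc n choose 2" unfolding e_def by (simp add: numeral_2_eq_2)
    finally show ?case .
  qed
qed

end



definition okw :: "('c, 'd) monoid_scheme \<Rightarrow> ('a \<Rightarrow> 'a \<Rightarrow> 'c) \<Rightarrow> 'a ext_word \<Rightarrow> bool" where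
  "okw L phi v \<longleftrightarrow> (\<forall>(b, g, h) \<in> set v. phi g h \<in> carrier L)"

lemma okw_simps [simp]: "okw L phi [] = True" "okw L phi ((b, g, h) # v) = (phi g h \<in> carrier L \<and> okw L phi v)"
  "okw L phi (v @ w) = (okw L phi v \<and> okw L phi w)"
  unfolding okw_def by (auto simp only: set_append ball_Un list.set ball_simps split: prod.splits)

lemma eval_closed: "group L \<Longrightarrow> okw L phi v \<Longrightarrow> eval_word L phi v \<in> carrier L"
proof (induction v)
  case Nil then show ?case by (simp add: group.is_monoid monoid.one_closed)
next
  case (Cons a v)
  obtain b g h where a: "a = (b, g, h)" by (cases a) auto
  then show ?case using Cons by (auto simp: group.is_monoid monoid.m_closed group.inv_closed)
qed

lemma eval_append: "group L \<Longrightarrow> okw L phi v \<Longrightarrow> okw L phi w \<Longrightarrow>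
  eval_word L phi (v @ w) = eval_word L phi v \<otimes>\<^bsub>L\<^esub> eval_word L phi w"
proof (induction v)
  case Nil then show ?case using eval_closed[of L phi w] by (simp add: group.is_monoid monoid.l_one)
next
  case (Cons a v)
  obtain b g h where a: "a = (b, g, h)" by (cases a) auto
  have c: "phi g h \<in> carrier L" "eval_word L phi v \<in> carrier L" "eval_word L phi w \<in> carrier L"
    using Cons a eval_closed by auto
  show ?case using Cons a c
    by (auto simp: group.is_monoid monoid.m_assoc group.inv_closed)
qed

lemma okw_replicate: "okw L phi v \<Longrightarrow> okw L phi (concat (replicate n v))"
  unfolding okw_def by auto

lemma eval_pow: "group L \<Longrightarrow> okw L phi v \<Longrightarrow>
  eval_word L phi (concat (replicate n v)) = eval_word L phi v [^]\<^bsub>L\<^esub> n"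
proof (induction n)
  case 0 then show ?case by simp
next
  case (Suc n)
  have "concat (replicate (Suc n) v) = concat (replicate n v) @ v"
    by (simp add: replicate_append_same[symmetric])
  then show ?case using Suc eval_append[of L phi "concat (replicate n v)" v] okw_replicate[of L phi v n]
    by simp
qed

lemma okw_words: "v \<in> ext_words G \<Longrightarrow> exterior_pairing G L phi \<Longrightarrow> okw L phi v"
  unfolding okw_def ext_words_def exterior_pairing_def by blast

lemma ext_words_append [simp]: "v @ w \<in> ext_words G \<longleftrightarrow> v \<in> ext_words G \<and> w \<in> ext_words G"
  unfolding ext_words_def by (simp only: mem_Collect_eq set_append ball_Un)

lemma ext_words_replicate: "v \<in> ext_words G \<Longrightarrow> concat (replicate n v) \<in> ext_words G"
  unfolding ext_words_def by auto

lemma ext_rel_refl: "v \<in> ext_words G \<Longrightarrow> (v, v) \<in> ext_rel G"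
  unfolding ext_rel_def by auto

lemma ext_rel_class_eq:
  assumes "(v, w) \<in> ext_rel G" shows "ext_rel G `` {v} = ext_rel G `` {w}"
  using assms unfolding ext_rel_def by auto

lemma mult_cls:
  assumes v: "v \<in> ext_words G" and w: "w \<in> ext_words G"
  shows "ext_rel G `` {v} \<otimes>\<^bsub>ext_square G\<^esub> ext_rel G `` {w} = ext_rel G `` {v @ w}"
proof -
  define v' where "v' = (SOME x. x \<in> ext_rel G `` {v})"
  define w' where "w' = (SOME x. x \<in> ext_rel G `` {w})"
  have "v' \<in> ext_rel G `` {v}" unfolding v'_def by (rule someI[of _ v]) (simp add: ext_rel_refl v)
  then have vv: "(v, v') \<in> ext_rel G" by simp
  have "w' \<in> ext_rel G `` {w}" unfolding w'_def by (rule someI[of _ w]) (simp add: ext_rel_refl w)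
  then have ww: "(w, w') \<in> ext_rel G" by simp
  have "(v @ w, v' @ w') \<in> ext_rel G"
  proof -
    have vw: "v' \<in> ext_words G" "w' \<in> ext_words G" using vv ww unfolding ext_rel_def by auto
    have "eval_word L phi (v @ w) = eval_word L phi (v' @ w')"
      if "group L" "exterior_pairing G L phi" for L :: "'a ext_word set monoid" and phi
    proof -
      have e: "eval_word L phi v = eval_word L phi v'" "eval_word L phi w = eval_word L phi w'"
        using vv ww that unfolding ext_rel_def by auto
      show ?thesis using that v w vw e
        by (simp add: eval_append okw_words)
    qed
    then show ?thesis unfolding ext_rel_def using v w vw by auto
  qed
  then show ?thesis
    unfolding ext_square_def v'_def w'_def by (simp add: ext_rel_class_eq)
qed

lemma one_cls: "\<one>\<^bsub>ext_square G\<^esub> = ext_rel G `` {[]}"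
  unfolding ext_square_def by simp

lemma pow_cls:
  assumes v: "v \<in> ext_words G"
  shows "(ext_rel G `` {v}) [^]\<^bsub>ext_square G\<^esub> (n::nat) = ext_rel G `` {concat (replicate n v)}"
proof (induction n)
  case 0 then show ?case by (simp add: one_cls)
next
  case (Suc n)
  have "concat (replicate (Suc n) v) = concat (replicate n v) @ v"
    by (simp add: replicate_append_same[symmetric])
  then show ?case using Suc mult_cls[OF ext_words_replicate[OF v] v, of n] by simp
qed



context ext_pair
begin

lemma core:
  assumes nil: "lcs G 5 = {\<one>\<^bsub>G\<^esub>}"
    and c: "g1 \<in> carrier G" "g2 \<in> carrier G" "h1 \<in> carrier G" "h2 \<in> carrier G"
  shows "(phi g1 h1 \<otimes>\<^bsub>L\<^esub> phi g2 h2) [^]\<^bsub>L\<^esub> (n::nat) =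
    (phi (comm G g2 h2) (comm G (comm G g2 h2) (comm G g1 h1))) [^]\<^bsub>L\<^esub> (n choose 3)
    \<otimes>\<^bsub>L\<^esub> (phi (comm G g1 h1) (comm G (comm G g2 h2) (comm G g1 h1)))
         [^]\<^bsub>L\<^esub> (2 * (n choose 3) + (n choose 2))
    \<otimes>\<^bsub>L\<^esub> (phi (comm G g2 h2) (comm G g1 h1)) [^]\<^bsub>L\<^esub> (n choose 2)
    \<otimes>\<^bsub>L\<^esub> (phi g1 h1) [^]\<^bsub>L\<^esub> n
    \<otimes>\<^bsub>L\<^esub> (phi g2 h2) [^]\<^bsub>L\<^esub> n"
proof -
  define a where "a = comm G g1 h1"
  define b where "b = comm G g2 h2"
  define ba where "ba = comm G b a"
  have cc: "a \<in> carrier G" "b \<in> carrier G" "ba \<in> carrier G" unfolding a_def b_def ba_def using c by auto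
  have a1: "a \<in> lcs G 1" unfolding a_def using c G.lcs_step[of g1 h1 0] by simp
  have ba3: "ba \<in> lcs G (Suc (Suc 1))" unfolding ba_def b_def using G.lcs_K[OF a1 c(2) c(4)] .
  have "comm G b ba \<in> lcs G 5" using G.lcs_K[OF ba3 c(2) c(4)] unfolding b_def by (simp add: eval_nat_numeral)
  then have t1: "comm G b ba = \<one>\<^bsub>G\<^esub>" using nil by simp
  have "comm G a ba \<in> lcs G 5" using G.lcs_K[OF ba3 c(1) c(3)] unfolding a_def by (simp add: eval_nat_numeral)
  then have t2: "comm G a ba = \<one>\<^bsub>G\<^esub>" using nil by simp
  define x where "x = phi g1 h1"
  define y where "y = phi g2 h2"
  define P where "P = phi b ba"
  define Q where "Q = phi a ba"
  define R where "R = phi b a"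
  have "(x \<otimes>\<^bsub>L\<^esub> y) [^]\<^bsub>L\<^esub> n = P [^]\<^bsub>L\<^esub> (n choose 3) \<otimes>\<^bsub>L\<^esub> Q [^]\<^bsub>L\<^esub> (2 * (n choose 3) + (n choose 2))
     \<otimes>\<^bsub>L\<^esub> R [^]\<^bsub>L\<^esub> (n choose 2) \<otimes>\<^bsub>L\<^esub> x [^]\<^bsub>L\<^esub> n \<otimes>\<^bsub>L\<^esub> y [^]\<^bsub>L\<^esub> n"
  proof (rule L.collect)
    show "x \<in> carrier L" "y \<in> carrier L" "P \<in> carrier L" "Q \<in> carrier L" "R \<in> carrier L"
      unfolding x_def y_def P_def Q_def R_def using c cc by auto
    show "y \<otimes>\<^bsub>L\<^esub> x = R \<otimes>\<^bsub>L\<^esub> x \<otimes>\<^bsub>L\<^esub> y"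
      unfolding x_def y_def R_def a_def b_def using C[of g2 h2 g1 h1] c by simp
    show "y \<otimes>\<^bsub>L\<^esub> R = P \<otimes>\<^bsub>L\<^esub> R \<otimes>\<^bsub>L\<^esub> y"
      unfolding y_def R_def P_def ba_def using C[of g2 h2 b a] c cc unfolding b_def by simp
    show "x \<otimes>\<^bsub>L\<^esub> R = Q \<otimes>\<^bsub>L\<^esub> R \<otimes>\<^bsub>L\<^esub> x"
      unfolding x_def R_def Q_def ba_def using C[of g1 h1 b a] c cc unfolding a_def by simp
    show "x \<otimes>\<^bsub>L\<^esub> P = P \<otimes>\<^bsub>L\<^esub> x" unfolding x_def P_def using C1[of g1 h1 b ba] c cc t1 by simp
    show "y \<otimes>\<^bsub>L\<^esub> P = P \<otimes>\<^bsub>L\<^esub> y" unfolding y_def P_def using C1[of g2 h2 b ba] c cc t1 by simp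
    show "R \<otimes>\<^bsub>L\<^esub> P = P \<otimes>\<^bsub>L\<^esub> R" unfolding R_def P_def using C1[of b a b ba] c cc t1 by simp
    show "Q \<otimes>\<^bsub>L\<^esub> P = P \<otimes>\<^bsub>L\<^esub> Q" unfolding Q_def P_def using C1[of a ba b ba] c cc t1 by simp
    show "x \<otimes>\<^bsub>L\<^esub> Q = Q \<otimes>\<^bsub>L\<^esub> x" unfolding x_def Q_def using C1[of g1 h1 a ba] c cc t2 by simp
    show "y \<otimes>\<^bsub>L\<^esub> Q = Q \<otimes>\<^bsub>L\<^esub> y" unfolding y_def Q_def using C1[of g2 h2 a ba] c cc t2 by simp
    show "R \<otimes>\<^bsub>L\<^esub> Q = Q \<otimes>\<^bsub>L\<^esub> R" unfolding R_def Q_def using C1[of b a a ba] c cc t2 by simp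
  qed
  then show ?thesis unfolding x_def y_def P_def Q_def R_def ba_def a_def b_def .
qed

end

lemma letter_words [simp]: "[(True, x, y)] \<in> ext_words G \<longleftrightarrow> x \<in> carrier G \<and> y \<in> carrier G"
  unfolding ext_words_def by simp

lemma eval_letter [simp]: "group L \<Longrightarrow> phi x y \<in> carrier L \<Longrightarrow> eval_word L phi [(True, x, y)] = phi x y"
  by (simp add: group.is_monoid monoid.r_one)

theorem theorem3p8:
  fixes G :: "('a, 'b) monoid_scheme"
  assumes "nilpotent_of_class G 5"
    and "g1 \<in> carrier G" "g2 \<in> carrier G" "h1 \<in> carrier G" "h2 \<in> carrier G"
  shows "(wedge G g1 h1 \<otimes>\<^bsub>ext_square G\<^esub> wedge G g2 h2) [^]\<^bsub>ext_square G\<^esub> (n::nat) =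
    (wedge G (comm G g2 h2) (comm G (comm G g2 h2) (comm G g1 h1))) [^]\<^bsub>ext_square G\<^esub> (n choose 3)
    \<otimes>\<^bsub>ext_square G\<^esub> (wedge G (comm G g1 h1) (comm G (comm G g2 h2) (comm G g1 h1)))
         [^]\<^bsub>ext_square G\<^esub> (2 * (n choose 3) + (n choose 2))
    \<otimes>\<^bsub>ext_square G\<^esub> (wedge G (comm G g2 h2) (comm G g1 h1)) [^]\<^bsub>ext_square G\<^esub> (n choose 2)
    \<otimes>\<^bsub>ext_square G\<^esub> (wedge G g1 h1) [^]\<^bsub>ext_square G\<^esub> n
    \<otimes>\<^bsub>ext_square G\<^esub> (wedge G g2 h2) [^]\<^bsub>ext_square G\<^esub> n"
proof -
  have grp: "group G" and nil: "lcs G 5 = {\<one>\<^bsub>G\<^esub>}" using assms(1) unfolding nilpotent_of_class_def by auto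
  interpret G: group G by (rule grp)
  note c = assms(2-5)
  define a where "a = comm G g1 h1"
  define b where "b = comm G g2 h2"
  define ba where "ba = comm G b a"
  have cc: "a \<in> carrier G" "b \<in> carrier G" "ba \<in> carrier G" unfolding a_def b_def ba_def using c by auto
  define l1 where "l1 = [(True, g1, h1)]"
  define l2 where "l2 = [(True, g2, h2)]"
  define lP where "lP = [(True, b, ba)]"
  define lQ where "lQ = [(True, a, ba)]"
  define lR where "lR = [(True, b, a)]"
  have W: "l1 \<in> ext_words G" "l2 \<in> ext_words G" "lP \<in> ext_words G" "lQ \<in> ext_words G" "lR \<in> ext_words G"
    unfolding l1_def l2_def lP_def lQ_def lR_def using c cc by auto
  define c3 where "c3 = n choose 3"
  define q where "q = 2 * (n choose 3) + (n choose 2)"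
  define c2 where "c2 = n choose 2"
  let ?cr = "\<lambda>k v. concat (replicate k v)"
  define lhs where "lhs = ?cr n (l1 @ l2)"
  define rhs where "rhs = ?cr c3 lP @ ?cr q lQ @ ?cr c2 lR @ ?cr n l1 @ ?cr n l2"
  have WW: "\<And>k v. v \<in> ext_words G \<Longrightarrow> ?cr k v \<in> ext_words G" by (rule ext_words_replicate)
  have L: "(wedge G g1 h1 \<otimes>\<^bsub>ext_square G\<^esub> wedge G g2 h2) [^]\<^bsub>ext_square G\<^esub> n = ext_rel G `` {lhs}"
    unfolding lhs_def wedge_def l1_def[symmetric] l2_def[symmetric]
    using W by (simp add: mult_cls pow_cls)
  have R: "(wedge G (comm G g2 h2) (comm G (comm G g2 h2) (comm G g1 h1))) [^]\<^bsub>ext_square G\<^esub> (n choose 3)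
    \<otimes>\<^bsub>ext_square G\<^esub> (wedge G (comm G g1 h1) (comm G (comm G g2 h2) (comm G g1 h1)))
         [^]\<^bsub>ext_square G\<^esub> (2 * (n choose 3) + (n choose 2))
    \<otimes>\<^bsub>ext_square G\<^esub> (wedge G (comm G g2 h2) (comm G g1 h1)) [^]\<^bsub>ext_square G\<^esub> (n choose 2)
    \<otimes>\<^bsub>ext_square G\<^esub> (wedge G g1 h1) [^]\<^bsub>ext_square G\<^esub> n
    \<otimes>\<^bsub>ext_square G\<^esub> (wedge G g2 h2) [^]\<^bsub>ext_square G\<^esub> n = ext_rel G `` {rhs}"
    unfolding rhs_def wedge_def a_def[symmetric] b_def[symmetric] ba_def[symmetric]
      l1_def[symmetric] l2_def[symmetric] lP_def[symmetric] lQ_def[symmetric] lR_def[symmetric]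
      c3_def[symmetric] q_def[symmetric] c2_def[symmetric]
    using W WW by (simp add: mult_cls pow_cls q_def c3_def c2_def)
  have "(lhs, rhs) \<in> ext_rel G"
  proof -
    have "eval_word L phi lhs = eval_word L phi rhs"
      if gl: "group L" and ep: "exterior_pairing G L phi" for L :: "'a ext_word set monoid" and phi
    proof -
      interpret E: ext_pair G L phi using grp gl ep by (simp add: ext_pair_def ext_pair_axioms_def)
      have ok: "okw L phi l1" "okw L phi l2" "okw L phi lP" "okw L phi lQ" "okw L phi lR"
        using W ep okw_words by blast+
      have "eval_word L phi lhs = (phi g1 h1 \<otimes>\<^bsub>L\<^esub> phi g2 h2) [^]\<^bsub>L\<^esub> n"
        unfolding lhs_def using ok gl c
        by (simp add: eval_pow eval_append) (simp add: l1_def l2_def)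
      also have "\<dots> = phi b ba [^]\<^bsub>L\<^esub> c3 \<otimes>\<^bsub>L\<^esub> phi a ba [^]\<^bsub>L\<^esub> q \<otimes>\<^bsub>L\<^esub> phi b a [^]\<^bsub>L\<^esub> c2
          \<otimes>\<^bsub>L\<^esub> phi g1 h1 [^]\<^bsub>L\<^esub> n \<otimes>\<^bsub>L\<^esub> phi g2 h2 [^]\<^bsub>L\<^esub> n"
        unfolding c3_def q_def c2_def ba_def a_def b_def using E.core[OF nil c] .
      also have "\<dots> = eval_word L phi rhs"
        unfolding rhs_def using ok gl c cc
        by (simp add: eval_pow eval_append okw_replicate E.L.m_assoc)
           (simp add: l1_def l2_def lP_def lQ_def lR_def)
      finally show ?thesis .
    qed
    moreover have "lhs \<in> ext_words G" "rhs \<in> ext_words G" unfolding lhs_def rhs_def using W WW by auto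
    ultimately show ?thesis unfolding ext_rel_def by auto
  qed
  then show ?thesis using L R ext_rel_class_eq by metis
qed


end
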